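(* Let $q$ be a prime power. Every outcome of the random graph $H_q^*$ is $K_4$-free.
   Context: $\mathcal H$ is the Hermitian unital $\{\langle x,y,z\rangle : x^{q+1}+y^{q+1}+z^{q+1}=0\}$ in the projective plane $\mathrm{PG}(2,q^2)$ (it has $q^3+1$ points and every line meets it in $1$ or $q+1$ points; lines meeting it in $q+1$ points are secants). $H_q$ is the graph on the set of secants, two distinct secants adjacent iff they meet in a point of $\mathcal H$. For $P\in\mathcal H$, $C_P$ is the set of secants through $P$ and $\mathcal C=\{C_P:P\in\mathcal H\}$. The random graph $H_q^*$ on vertex set $V(H_q)$ is defined as follows: for each $C\in\mathcal C$, independently over cliques and vertices, each vertex of $C$ is placed in $A_C$ or $B_C$ with probability $1/2$ each; $H_q^*$ is the union over $C\in\mathcal C$ of the complete bipartite graphs with parts $A_C$ and $B_C$. *)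

theory Defs
  imports "HOL-Number_Theory.Number_Theory" "HOL-Library.Cardinality"
begin

type_synonym 'a vec3 = "'a \<times> 'a \<times> 'a"

definition pt :: "'a::field vec3 \<Rightarrow> 'a vec3 set" where
  "pt v = {(c * fst v, c * fst (snd v), c * snd (snd v)) | c. c \<noteq> 0}"

definition PG2 :: "'a::field vec3 set set" where
  "PG2 = {pt v | v. v \<noteq> (0, 0, 0)}"

definition line_of :: "'a::field vec3 \<Rightarrow> 'a vec3 set set" where
  "line_of l = {P \<in> PG2. \<exists>x y z. (x, y, z) \<in> P \<and>
       fst l * x + fst (snd l) * y + snd (snd l) * z = 0}"

definition lines :: "'a::field vec3 set set set" where
  "lines = {line_of l | l. l \<noteq> (0, 0, 0)}"

text \<open>Hermitian unital x^(q+1)+y^(q+1)+z^(q+1)=0 (field of order q^2).\<close>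
definition herm :: "nat \<Rightarrow> 'a::field vec3 set set" where
  "herm q = {P \<in> PG2. \<exists>x y z. (x, y, z) \<in> P \<and> x ^ (q + 1) + y ^ (q + 1) + z ^ (q + 1) = 0}"

definition secants :: "nat \<Rightarrow> 'a::field vec3 set set set" where
  "secants q = {L \<in> lines. card (L \<inter> herm q) = q + 1}"

definition clique_C :: "nat \<Rightarrow> 'a::field vec3 set \<Rightarrow> 'a vec3 set set set" where
  "clique_C q P = {L \<in> secants q. P \<in> L}"

text \<open>An outcome of H_q^*: side P L = True means L \<in> A_{C_P}, False means L \<in> B_{C_P}.
  Adjacency in the union of the complete bipartite graphs K(A_{C_P}, B_{C_P}).\<close>
definition Hstar_adj :: "nat \<Rightarrow> ('a::field vec3 set \<Rightarrow> 'a vec3 set set \<Rightarrow> bool)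
    \<Rightarrow> 'a vec3 set set \<Rightarrow> 'a vec3 set set \<Rightarrow> bool" where
  "Hstar_adj q side L M \<longleftrightarrow> (\<exists>P \<in> herm q. L \<in> clique_C q P \<and> M \<in> clique_C q P
      \<and> side P L \<noteq> side P M)"

end

theory Submission imports Defs begin

fun vdot :: "'a::field vec3 \<Rightarrow> 'a vec3 \<Rightarrow> 'a" where
  "vdot (a1,a2,a3) (b1,b2,b3) = a1*b1+a2*b2+a3*b3"
fun vcross :: "'a::field vec3 \<Rightarrow> 'a vec3 \<Rightarrow> 'a vec3" where
  "vcross (u1,u2,u3) (v1,v2,v3) = (u2*v3 - u3*v2, u3*v1 - u1*v3, u1*v2 - u2*v1)"
fun vsm :: "'a::field \<Rightarrow> 'a vec3 \<Rightarrow> 'a vec3" where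
  "vsm k (v1,v2,v3) = (k*v1,k*v2,k*v3)"
fun vad :: "'a::field vec3 \<Rightarrow> 'a vec3 \<Rightarrow> 'a vec3" where
  "vad (u1,u2,u3) (v1,v2,v3) = (u1+v1,u2+v2,u3+v3)"
definition vdet :: "'a::field vec3 \<Rightarrow> 'a vec3 \<Rightarrow> 'a vec3 \<Rightarrow> 'a" where
  "vdet u v w = vdot u (vcross v w)"

lemma vdot_sm: "vdot l (vsm k v) = k * vdot l v"
  by (cases l rule: prod_cases3; cases v rule: prod_cases3) (simp add: algebra_simps)
lemma vdot_ad: "vdot l (vad u v) = vdot l u + vdot l v"
  by (cases l rule: prod_cases3; cases v rule: prod_cases3; cases u rule: prod_cases3) (simp add: algebra_simps)

lemma lemL: "vsm (vdet u v w) l = vad (vad (vsm (vdot l u) (vcross v w)) (vsm (vdot l v) (vcross w u))) (vsm (vdot l w) (vcross u v))"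
  by (cases l rule: prod_cases3; cases v rule: prod_cases3; cases u rule: prod_cases3; cases w rule: prod_cases3) (simp add: vdet_def algebra_simps)

lemma cramer: "vsm (vdet a b c) x = vad (vad (vsm (vdet x b c) a) (vsm (vdet a x c) b)) (vsm (vdet a b x) c)"
  by (cases a rule: prod_cases3; cases b rule: prod_cases3; cases c rule: prod_cases3; cases x rule: prod_cases3) (simp add: vdet_def algebra_simps)

lemma det_comb: "vdet (vad (vsm be b) (vsm ga c)) (vad (vsm al a) (vsm ga' c)) (vad (vsm al' a) (vsm be' b))
   = vdet a b c * (be*ga'*al' + ga*al*be')"
  by (cases a rule: prod_cases3; cases b rule: prod_cases3; cases c rule: prod_cases3) (simp add: vdet_def algebra_simps)

lemma cross_triple: "vcross l (vcross u v) = vad (vsm (vdot l v) u) (vsm (- vdot l u) v)"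
  by (cases l rule: prod_cases3; cases v rule: prod_cases3; cases u rule: prod_cases3) (simp add: algebra_simps)

lemma dot_cross: "vdot (vcross u v) x = vdet x u v"
  by (cases x rule: prod_cases3; cases v rule: prod_cases3; cases u rule: prod_cases3) (simp add: vdet_def algebra_simps)

lemma cauchy_binet: "vdet a b c * vdet a' b' c' =
  vdot a a' * (vdot b b' * vdot c c' - vdot b c' * vdot c b')
 - vdot a b' * (vdot b a' * vdot c c' - vdot b c' * vdot c a')
 + vdot a c' * (vdot b a' * vdot c b' - vdot b b' * vdot c a')"
  by (cases a rule: prod_cases3; cases b rule: prod_cases3; cases c rule: prod_cases3;
      cases a' rule: prod_cases3; cases b' rule: prod_cases3; cases c' rule: prod_cases3) (simp add: vdet_def algebra_simps)



lemma cross_zero: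
  assumes "u \<noteq> (0,0,0)" "vcross u v = (0,0,0)"
  shows "\<exists>k. v = vsm k u"
proof -
  obtain u1 u2 u3 where u: "u = (u1,u2,u3)" by (cases u rule: prod_cases3)
  obtain v1 v2 v3 where v: "v = (v1,v2,v3)" by (cases v rule: prod_cases3)
  have e: "u2*v3 = u3*v2" "u3*v1 = u1*v3" "u1*v2 = u2*v1" using assms(2) unfolding u v by auto
  consider "u1 \<noteq> 0" | "u2 \<noteq> 0" | "u3 \<noteq> 0" using assms(1) unfolding u by auto
  then show ?thesis
  proof cases
    case 1 then show ?thesis unfolding u v using e
      by (intro exI[of _ "v1/u1"]) (auto simp: field_simps)
  next
    case 2 then show ?thesis unfolding u v using e
      by (intro exI[of _ "v2/u2"]) (auto simp: field_simps)
  next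
    case 3 then show ?thesis unfolding u v using e
      by (intro exI[of _ "v3/u3"]) (auto simp: field_simps)
  qed
qed

lemma vdot_comm: "vdot u v = vdot v u"
  by (cases u rule: prod_cases3; cases v rule: prod_cases3) (simp add: algebra_simps)
lemma vdot_sm_left: "vdot (vsm k u) v = k * vdot u v"
  by (cases u rule: prod_cases3; cases v rule: prod_cases3) (simp add: algebra_simps)
lemma vsm_0[simp]: "vsm 0 u = (0,0,0)"
  by (cases u rule: prod_cases3) simp
lemma vad_0[simp]: "vad (0,0,0) u = u" "vad u (0,0,0) = u"
  by (cases u rule: prod_cases3; simp)+
lemma vsm_eq0: "vsm k l = (0,0,0) \<Longrightarrow> l \<noteq> (0,0,0) \<Longrightarrow> k = 0"
  by (cases l rule: prod_cases3) auto

lemma detzero: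
  assumes "l \<noteq> (0,0,0)" "vdot l u = 0" "vdot l v = 0" "vdot l w = 0"
  shows "vdet u v w = 0"
  using lemL[of u v w l] assms by (auto intro: vsm_eq0)

lemma det_nz:
  assumes "l \<noteq> (0,0,0)" "vcross b c \<noteq> (0,0,0)" "vdot l b = 0" "vdot l c = 0" "vdot l a \<noteq> 0"
  shows "vdet a b c \<noteq> 0"
proof -
  have "vcross (vcross b c) l = (0,0,0)"
  proof -
    have "vcross l (vcross b c) = (0,0,0)" using cross_triple[of l b c] assms by simp
    then show ?thesis by (cases l rule: prod_cases3; cases b rule: prod_cases3; cases c rule: prod_cases3)
      (simp add: algebra_simps)
  qed
  then obtain k where "l = vsm k (vcross b c)" using cross_zero assms(2) by blast
  then have "vdot l a = k * vdot (vcross b c) a" by (simp add: vdot_sm_left)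
  then have "vdot l a = k * vdet a b c" by (simp add: dot_cross)
  then show ?thesis using assms(5) by auto
qed

fun vmap :: "('a \<Rightarrow> 'a) \<Rightarrow> 'a vec3 \<Rightarrow> 'a vec3" where
  "vmap f (v1,v2,v3) = (f v1, f v2, f v3)"

locale invol =
  fixes s :: "'a::field \<Rightarrow> 'a"
  assumes s_add: "s (x + y) = s x + s y"
    and s_mult: "s (x * y) = s x * s y"
    and s_inv: "s (s x) = x"
begin

lemma s0[simp]: "s 0 = 0"
proof -
  have "s 0 + s 0 = s 0 + 0" using s_add[of 0 0] by simp
  then show ?thesis by (simp only: add_left_cancel)
qed
lemma s_minus: "s (- x) = - s x"
proof -
  have "s x + s (- x) = 0" using s_add[of x "-x"] by simp
  then show ?thesis by (rule minus_unique[symmetric])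
qed
lemma s_diff: "s (x - y) = s x - s y"
  using s_add[of x "-y"] s_minus[of y] by simp
lemma s_eq0[simp]: "s x = 0 \<longleftrightarrow> x = 0"
  by (metis s0 s_inv)

lemmas s_simps = s_add s_mult s_inv s_minus s_diff

definition hh :: "'a vec3 \<Rightarrow> 'a vec3 \<Rightarrow> 'a" where
  "hh u v = vdot u (vmap s v)"

lemma hh_sym: "hh v u = s (hh u v)"
  by (cases u rule: prod_cases3; cases v rule: prod_cases3) (simp add: hh_def s_simps algebra_simps)

lemma hh_comb: "hh (vad (vsm be b) (vsm ga c)) (vad (vsm be b) (vsm ga c)) =
   be * s be * hh b b + be * s ga * hh b c + ga * s be * hh c b + ga * s ga * hh c c"
  by (cases b rule: prod_cases3; cases c rule: prod_cases3) (simp add: hh_def s_simps algebra_simps)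

lemma det_s: "vdet (vmap s a) (vmap s b) (vmap s c) = s (vdet a b c)"
  by (cases a rule: prod_cases3; cases b rule: prod_cases3; cases c rule: prod_cases3) (simp add: vdet_def s_simps algebra_simps)

lemma gram: "vdet a b c * s (vdet a b c) =
  hh a a * (hh b b * hh c c - hh b c * hh c b)
 - hh a b * (hh b a * hh c c - hh b c * hh c a)
 + hh a c * (hh b a * hh c b - hh b b * hh c a)"
  unfolding hh_def det_s[symmetric] by (rule cauchy_binet)


lemma hh_sm: "hh (vsm k u) (vsm k u) = k * s k * hh u u"
  by (cases u rule: prod_cases3) (simp add: hh_def s_simps algebra_simps)

lemma onan:
  assumes l4: "l4 \<noteq> (0,0,0)" and bnz: "b \<noteq> (0,0,0)"
    and iso: "hh a a = 0" "hh b b = 0" "hh c c = 0" "hh x x = 0" "hh y y = 0" "hh z z = 0"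
    and inc: "vdot l1 b = 0" "vdot l1 c = 0" "vdot l1 x = 0"
      "vdot l2 a = 0" "vdot l2 c = 0" "vdot l2 y = 0"
      "vdot l3 a = 0" "vdot l3 b = 0" "vdot l3 z = 0"
      "vdot l4 x = 0" "vdot l4 y = 0" "vdot l4 z = 0"
    and ninc: "vdot l1 a \<noteq> 0" "vdot l3 c \<noteq> 0" "vdot l3 x \<noteq> 0" "vdot l1 y \<noteq> 0" "vdot l2 z \<noteq> 0"
  shows False
proof -
  have l1: "l1 \<noteq> (0,0,0)" using ninc(1) by (cases a rule: prod_cases3) auto
  have l2: "l2 \<noteq> (0,0,0)" using ninc(5) by (cases z rule: prod_cases3) auto
  have l3: "l3 \<noteq> (0,0,0)" using ninc(2) by (cases c rule: prod_cases3) auto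
  have bc: "vcross b c \<noteq> (0,0,0)"
  proof
    assume "vcross b c = (0,0,0)"
    then obtain k where "c = vsm k b" using cross_zero bnz by blast
    then have "vdot l3 c = 0" using inc(8) by (simp add: vdot_sm)
    then show False using ninc(2) by simp
  qed
  define D where "D = vdet a b c"
  have D: "D \<noteq> 0" unfolding D_def using det_nz[OF l1 bc inc(1,2) ninc(1)] .
  have dx: "vdet x b c = 0" using detzero[OF l1] inc by simp
  have dy: "vdet a y c = 0" using detzero[OF l2] inc by simp
  have dz: "vdet a b z = 0" using detzero[OF l3] inc by simp
  define be where "be = vdet a x c"
  define ga where "ga = vdet a b x"
  define al where "al = vdet y b c"
  define ga' where "ga' = vdet a b y"
  define al' where "al' = vdet z b c"
  define be' where "be' = vdet a z c"
  have X: "vsm D x = vad (vsm be b) (vsm ga c)"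
    using cramer[of a b c x] dx unfolding D_def be_def ga_def by simp
  have Y: "vsm D y = vad (vsm al a) (vsm ga' c)"
    using cramer[of a b c y] dy unfolding D_def al_def ga'_def by simp
  have Z: "vsm D z = vad (vsm al' a) (vsm be' b)"
    using cramer[of a b c z] dz unfolding D_def al'_def be'_def by simp
  have "vdet (vsm D x) (vsm D y) (vsm D z) = 0"
    using detzero[OF l4] inc by (simp add: vdot_sm)
  then have "D * (be*ga'*al' + ga*al*be') = 0"
    unfolding X Y Z det_comb by (simp add: D_def)
  then have col: "be*ga'*al' = - (ga*al*be')" using D by (simp add: eq_neg_iff_add_eq_0)
  have "vdot l3 (vsm D x) \<noteq> 0" using D ninc by (simp add: vdot_sm)
  then have ga: "ga \<noteq> 0" unfolding X using inc by (auto simp: vdot_ad vdot_sm)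
  have "vdot l1 (vsm D y) \<noteq> 0" using D ninc by (simp add: vdot_sm)
  then have al: "al \<noteq> 0" unfolding Y using inc by (auto simp: vdot_ad vdot_sm)
  have "vdot l2 (vsm D z) \<noteq> 0" using D ninc by (simp add: vdot_sm)
  then have be': "be' \<noteq> 0" unfolding Z using inc by (auto simp: vdot_ad vdot_sm)
  define z1 where "z1 = hh b c"
  define z2 where "z2 = hh a c"
  define z3 where "z3 = hh a b"
  have "hh (vsm D x) (vsm D x) = 0" by (simp add: hh_sm iso)
  then have E1: "be * s ga * z1 + s (be * s ga * z1) = 0"
    unfolding X hh_comb using iso unfolding z1_def
    by (simp add: hh_sym[of c b] s_simps algebra_simps)
  have "hh (vsm D y) (vsm D y) = 0" by (simp add: hh_sm iso)
  then have E2: "al * s ga' * z2 + s (al * s ga' * z2) = 0"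
    unfolding Y hh_comb using iso unfolding z2_def
    by (simp add: hh_sym[of c a] s_simps algebra_simps)
  have "hh (vsm D z) (vsm D z) = 0" by (simp add: hh_sm iso)
  then have E3: "al' * s be' * z3 + s (al' * s be' * z3) = 0"
    unfolding Z hh_comb using iso unfolding z3_def
    by (simp add: hh_sym[of b a] s_simps algebra_simps)
  have G: "D * s D = z3 * z1 * s z2 + z2 * s z3 * s z1"
    unfolding D_def gram using iso unfolding z1_def z2_def z3_def
    by (simp add: hh_sym[of c b] hh_sym[of c a] hh_sym[of b a] algebra_simps)
  define u1 where "u1 = be * s ga * z1"
  define u2 where "u2 = al * s ga' * z2"
  define u3 where "u3 = al' * s be' * z3"
  define m where "m = ga*al*be'"
  define g where "g = z2 * s z1 * s z3"
  have su1: "s u1 = - u1" using E1 unfolding u1_def by (simp add: eq_neg_iff_add_eq_0 add.commute)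
  have su2: "s u2 = - u2" using E2 unfolding u2_def by (simp add: eq_neg_iff_add_eq_0 add.commute)
  have su3: "s u3 = - u3" using E3 unfolding u3_def by (simp add: eq_neg_iff_add_eq_0 add.commute)
  define w where "w = u2 * s u1 * s u3"
  have w1: "w = m * s (be*ga'*al') * g"
    unfolding w_def u1_def u2_def u3_def m_def g_def by (simp add: s_simps mult_ac)
  have w2: "w = - (m * s m * g)" unfolding w1 col by (simp add: s_simps m_def)
  have "s w = - w" unfolding w_def using su1 su2 su3 by (simp add: s_simps)
  then have "- (s m * m * s g) = m * s m * g" unfolding w2 by (simp add: s_simps)
  then have "s m * m * s g = - (m * s m * g)" by (simp add: minus_equation_iff)
  then have "(m * s m) * (g + s g) = 0" by (simp add: algebra_simps)
  moreover have "m \<noteq> 0" unfolding m_def using ga al be' by simp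
  ultimately have "g + s g = 0" by simp
  then have "D * s D = 0" unfolding G g_def by (simp add: s_simps algebra_simps)
  then show False using D by simp
qed

end


lemma card4: "card S = 4 \<Longrightarrow> \<exists>a b c d. S = {a,b,c,d} \<and> a \<noteq> b \<and> a \<noteq> c \<and> a \<noteq> d \<and> b \<noteq> c \<and> b \<noteq> d \<and> c \<noteq> d"
  by (auto simp: card_Suc_eq numeral_eq_Suc)

lemma pt_alt: "pt v = {vsm c v | c. c \<noteq> 0}"
  by (cases v rule: prod_cases3) (simp add: pt_def)

lemma pt_self: "v \<in> pt v"
  unfolding pt_alt by (cases v rule: prod_cases3) (auto intro: exI[of _ 1])

lemma line_of_alt: "line_of l = {P \<in> PG2. \<exists>v\<in>P. vdot l v = 0}"
  unfolding line_of_def by (cases l rule: prod_cases3) (auto simp: Bex_def)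

lemma PG2_E: "P \<in> PG2 \<Longrightarrow> \<exists>p. p \<noteq> (0,0,0) \<and> P = pt p"
  unfolding PG2_def by blast

lemma pt_PG2: "p \<noteq> (0,0,0) \<Longrightarrow> pt p \<in> PG2"
  unfolding PG2_def by blast

lemma pt_line:
  assumes "p \<noteq> (0,0,0)"
  shows "pt p \<in> line_of l \<longleftrightarrow> vdot l p = 0"
proof
  assume "pt p \<in> line_of l"
  then obtain v where "v \<in> pt p" "vdot l v = 0" unfolding line_of_alt by blast
  then obtain c where "c \<noteq> 0" "vdot l (vsm c p) = 0" unfolding pt_alt by blast
  then show "vdot l p = 0" by (simp add: vdot_sm)
next
  assume "vdot l p = 0"
  then show "pt p \<in> line_of l" unfolding line_of_alt using pt_PG2[OF assms] pt_self[of p] by blast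
qed

lemma line_PG2: "P \<in> line_of l \<Longrightarrow> P \<in> PG2"
  unfolding line_of_alt by auto

lemma pt_sm:
  assumes c: "c \<noteq> 0"
  shows "pt (vsm c p) = pt p"
proof -
  obtain p1 p2 p3 where pp: "p = (p1,p2,p3)" by (cases p rule: prod_cases3)
  show ?thesis
  proof (rule equalityI; rule subsetI)
    fix v
    assume "v \<in> pt (vsm c p)"
    then obtain e where e: "e \<noteq> 0" "v = vsm e (vsm c p)" unfolding pt_alt by blast
    have "v = vsm (e*c) p" using e(2) by (simp add: pp mult.assoc)
    then show "v \<in> pt p" unfolding pt_alt using e(1) c by auto
  next
    fix v
    assume "v \<in> pt p"
    then obtain e where e: "e \<noteq> 0" "v = vsm e p" unfolding pt_alt by blast
    have "v = vsm (e/c) (vsm c p)" using e(2) c by (simp add: pp)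
    then show "v \<in> pt (vsm c p)" unfolding pt_alt using e(1) c by auto
  qed
qed

lemma line_param:
  assumes "l \<noteq> (0,0,0)" "vcross x p \<noteq> (0,0,0)" "vdot l x = 0" "vdot l p = 0"
  shows "\<exists>k. k \<noteq> 0 \<and> l = vsm k (vcross x p)"
proof -
  have "vcross (vcross x p) l = (0,0,0)"
  proof -
    have "vcross l (vcross x p) = (0,0,0)" using cross_triple[of l x p] assms by simp
    then show ?thesis by (cases l rule: prod_cases3; cases x rule: prod_cases3; cases p rule: prod_cases3)
      (simp add: algebra_simps)
  qed
  then obtain k where k: "l = vsm k (vcross x p)" using cross_zero assms(2) by blast
  then have "k \<noteq> 0" using assms(1) by auto
  then show ?thesis using k by blast
qed

lemma two_lines:
  assumes l: "l \<noteq> (0,0,0)" and m: "m \<noteq> (0,0,0)" and lm: "line_of l \<noteq> line_of m"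
    and X: "X \<in> line_of l" "X \<in> line_of m" and P: "P \<in> line_of l" "P \<in> line_of m"
  shows "X = P"
proof -
  obtain x where x: "x \<noteq> (0,0,0)" "X = pt x" using PG2_E line_PG2 X(1) by blast
  obtain p where p: "p \<noteq> (0,0,0)" "P = pt p" using PG2_E line_PG2 P(1) by blast
  have d: "vdot l x = 0" "vdot m x = 0" "vdot l p = 0" "vdot m p = 0"
    using X P x p by (auto simp: pt_line)
  show ?thesis
  proof (cases "vcross x p = (0,0,0)")
    case True
    then obtain k where k: "p = vsm k x" using cross_zero x(1) by blast
    then have "k \<noteq> 0" using p(1) by auto
    then show ?thesis using x p k by (simp add: pt_sm)
  next
    case False
    obtain k where k: "k \<noteq> 0" "l = vsm k (vcross x p)" using line_param[OF l False d(1,3)] by blast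
    obtain k' where k': "k' \<noteq> 0" "m = vsm k' (vcross x p)" using line_param[OF m False d(2,4)] by blast
    have "line_of l = line_of m" unfolding line_of_alt k(2) k'(2)
      using k(1) k'(1) by (simp add: vdot_sm_left)
    then show ?thesis using lm by simp
  qed
qed

lemma pt_herm:
  assumes "p \<noteq> (0,0,0)" "pt p \<in> herm q"
  shows "vdot p (vmap (\<lambda>x. x ^ q) p) = 0"
proof -
  obtain x y z where xyz: "(x,y,z) \<in> pt p" "x ^ (q + 1) + y ^ (q + 1) + z ^ (q + 1) = 0"
    using assms(2) unfolding herm_def by blast
  obtain c where c: "c \<noteq> 0" "(x,y,z) = vsm c p" using xyz(1) unfolding pt_alt by auto
  obtain p1 p2 p3 where pp: "p = (p1,p2,p3)" by (cases p rule: prod_cases3)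
  have "c ^ (q+1) * (p1 ^ (q+1) + p2 ^ (q+1) + p3 ^ (q+1)) = 0"
    using xyz(2) c(2) unfolding pp by (simp add: power_mult_distrib algebra_simps)
  then have "p1 ^ (q+1) + p2 ^ (q+1) + p3 ^ (q+1) = 0" using c(1) by simp
  then show ?thesis unfolding pp by (simp add: algebra_simps)
qed

lemma finite_field_pow_card:
  fixes x :: "'a :: {field,finite}"
  shows "x ^ card (UNIV :: 'a set) = x"
proof (cases "x = 0")
  case False
  have "x * (\<Prod>y\<in>UNIV-{0}. x * y) = x * x ^ (card (UNIV :: 'a set) - 1) * \<Prod>(UNIV-{0})"
    by (simp add: prod.distrib mult_ac)
  also have "x * x ^ (card (UNIV :: 'a set) - 1) = x ^ Suc (card (UNIV :: 'a set) - 1)"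
    by (subst power_Suc) auto
  also have "Suc (card (UNIV :: 'a set) - 1) = card (UNIV :: 'a set)"
    using finite_UNIV_card_ge_0[where ?'a = 'a] by simp
  also have "(\<Prod>y\<in>UNIV-{0}. x * y) = (\<Prod>y\<in>UNIV-{0}. y)"
    by (rule prod.reindex_bij_witness[of _ "\<lambda>y. y / x" "\<lambda>y. x * y"]) (use False in auto)
  finally show ?thesis
    by simp
qed (use finite_UNIV_card_ge_0[where ?'a = 'a] in auto)

lemma frob_invol:
  assumes "primepow q" "CARD('a::{field,finite}) = q ^ 2"
  shows "invol (\<lambda>x::'a. x ^ q)"
proof
  obtain p k where pk: "prime p" "k > 0" "q = p ^ k" using assms(1) unfolding primepow_def by blast
  have cp: "CHAR('a) > 0" by (rule finite_imp_CHAR_pos) simp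
  then have pc: "prime CHAR('a)" by (rule prime_CHAR_semidom)
  have "CHAR('a) dvd p ^ (k * 2)" using CHAR_dvd_CARD[where 'a='a] assms(2) pk(3)
    by (simp add: power_mult)
  then have "CHAR('a) dvd p" using pc prime_dvd_power by blast
  then have ch: "CHAR('a) = p" using pc pk(1) by (simp add: primes_dvd_imp_eq)
  fix x y :: 'a
  show "(x + y) ^ q = x ^ q + y ^ q"
    by (rule freshmans_dream'[OF pc]) (simp add: ch pk(3))
  show "(x * y) ^ q = x ^ q * y ^ q" by (simp add: power_mult_distrib)
  show "(x ^ q) ^ q = x"
    using finite_field_pow_card[of x] assms(2) by (simp add: power_mult[symmetric] power2_eq_square)
qed


theorem mainTheorem7:
  fixes q :: nat
    and side :: "'a::{field,finite} vec3 set \<Rightarrow> 'a vec3 set set \<Rightarrow> bool"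
  assumes "primepow q"
    and "CARD('a) = q ^ 2"
  shows "\<not> (\<exists>S \<subseteq> secants q. card S = 4 \<and>
            (\<forall>L\<in>S. \<forall>M\<in>S. L \<noteq> M \<longrightarrow> Hstar_adj q side L M))"
proof
  assume "\<exists>S \<subseteq> secants q. card S = 4 \<and> (\<forall>L\<in>S. \<forall>M\<in>S. L \<noteq> M \<longrightarrow> Hstar_adj q side L M)"
  then obtain S where S: "S \<subseteq> secants q" "card S = 4"
    and adj0: "\<forall>L\<in>S. \<forall>M\<in>S. L \<noteq> M \<longrightarrow> Hstar_adj q side L M" by (elim exE conjE)
  have adj: "Hstar_adj q side L M" if H: "L\<in>S" "M\<in>S" "L \<noteq> M" for L M
    using adj0 H by blast
  interpret invol "\<lambda>x::'a. x ^ q" using frob_invol assms by blast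
  have lin: "\<And>L. L\<in>S \<Longrightarrow> \<exists>l. l \<noteq> (0,0,0) \<and> L = line_of l"
    using S(1) unfolding secants_def lines_def by blast
  have uniq: "X = Y" if H: "L\<in>S" "M\<in>S" "L\<noteq>M" "X\<in>L" "X\<in>M" "Y\<in>L" "Y\<in>M" for L M X Y
  proof -
    obtain l where l: "l \<noteq> (0,0,0)" "L = line_of l" using lin[OF H(1)] by metis
    obtain m where m: "m \<noteq> (0,0,0)" "M = line_of m" using lin[OF H(2)] by metis
    show ?thesis by (rule two_lines[OF l(1) m(1)]) (use H l m in auto)
  qed
  have diff: "side X L \<noteq> side X M" if H: "L\<in>S" "M\<in>S" "L\<noteq>M" "X\<in>L" "X\<in>M" for L M X
  proof -
    obtain P where P: "P \<in> L" "P \<in> M" "side P L \<noteq> side P M"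
      using adj[OF H(1-3)] unfolding Hstar_adj_def clique_C_def by blast
    have "X = P" using uniq[OF H P(1,2)] .
    then show ?thesis using P(3) by simp
  qed
  have no3: False if H: "L\<in>S" "M\<in>S" "N\<in>S" "L\<noteq>M" "L\<noteq>N" "M\<noteq>N" "X\<in>L" "X\<in>M" "X\<in>N" for L M N X
  proof -
    have "side X L \<noteq> side X M" "side X L \<noteq> side X N" "side X M \<noteq> side X N"
      using diff H by blast+
    then show False by (cases "side X L"; cases "side X M"; cases "side X N") auto
  qed
  have getpt: "\<exists>p. p \<noteq> (0,0,0) \<and> pt p \<in> L \<and> pt p \<in> M \<and> hh p p = 0"
    if H: "L\<in>S" "M\<in>S" "L\<noteq>M" for L M
  proof -
    obtain P where P: "P \<in> herm q" "P \<in> L" "P \<in> M"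
      using adj[OF H] unfolding Hstar_adj_def clique_C_def by blast
    obtain p where p: "p \<noteq> (0,0,0)" "P = pt p" using PG2_E P(1) unfolding herm_def by blast
    have "hh p p = 0" using pt_herm[OF p(1)] P(1) p(2) unfolding hh_def by simp
    then show ?thesis using p P by blast
  qed
  obtain L1 L2 L3 L4 where SS: "S = {L1,L2,L3,L4}" and dd: "L1 \<noteq> L2" "L1 \<noteq> L3" "L1 \<noteq> L4"
     "L2 \<noteq> L3" "L2 \<noteq> L4" "L3 \<noteq> L4" using card4[OF S(2)] by blast
  have inS: "L1 \<in> S" "L2 \<in> S" "L3 \<in> S" "L4 \<in> S" using SS by auto
  obtain l1 where l1: "l1 \<noteq> (0,0,0)" "L1 = line_of l1" using lin[OF inS(1)] by metis
  obtain l2 where l2: "l2 \<noteq> (0,0,0)" "L2 = line_of l2" using lin[OF inS(2)] by metis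
  obtain l3 where l3: "l3 \<noteq> (0,0,0)" "L3 = line_of l3" using lin[OF inS(3)] by metis
  obtain l4 where l4: "l4 \<noteq> (0,0,0)" "L4 = line_of l4" using lin[OF inS(4)] by metis
  obtain a where a: "a \<noteq> (0,0,0)" "pt a \<in> L2" "pt a \<in> L3" "hh a a = 0" using getpt[OF inS(2) inS(3) dd(4)] by blast
  obtain b where b: "b \<noteq> (0,0,0)" "pt b \<in> L1" "pt b \<in> L3" "hh b b = 0" using getpt[OF inS(1) inS(3) dd(2)] by blast
  obtain c where c: "c \<noteq> (0,0,0)" "pt c \<in> L1" "pt c \<in> L2" "hh c c = 0" using getpt[OF inS(1) inS(2) dd(1)] by blast
  obtain x where x: "x \<noteq> (0,0,0)" "pt x \<in> L1" "pt x \<in> L4" "hh x x = 0" using getpt[OF inS(1) inS(4) dd(3)] by blast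
  obtain y where y: "y \<noteq> (0,0,0)" "pt y \<in> L2" "pt y \<in> L4" "hh y y = 0" using getpt[OF inS(2) inS(4) dd(5)] by blast
  obtain z where z: "z \<noteq> (0,0,0)" "pt z \<in> L3" "pt z \<in> L4" "hh z z = 0" using getpt[OF inS(3) inS(4) dd(6)] by blast
  have I: "vdot l p = 0" if H: "p \<noteq> (0,0,0)" "pt p \<in> line_of l" for l p
    using pt_line[OF H(1)] H(2) by blast
  have J: "pt p \<in> line_of l" if H: "p \<noteq> (0,0,0)" "vdot l p = 0" for l p
    using pt_line[OF H(1)] H(2) by blast
  have n1: "vdot l1 a \<noteq> 0"
  proof
    assume "vdot l1 a = 0"
    then have "pt a \<in> L1" using J[OF a(1)] l1(2) by simp
    then show False using no3[OF inS(1) inS(2) inS(3) dd(1) dd(2) dd(4) _ a(2) a(3)] by blast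
  qed
  have n2: "vdot l3 c \<noteq> 0"
  proof
    assume "vdot l3 c = 0"
    then have "pt c \<in> L3" using J[OF c(1)] l3(2) by simp
    then show False using no3[OF inS(1) inS(2) inS(3) dd(1) dd(2) dd(4) c(2) c(3)] by blast
  qed
  have n3: "vdot l3 x \<noteq> 0"
  proof
    assume "vdot l3 x = 0"
    then have "pt x \<in> L3" using J[OF x(1)] l3(2) by simp
    then show False using no3[OF inS(1) inS(3) inS(4) dd(2) dd(3) dd(6) x(2) _ x(3)] by blast
  qed
  have n4: "vdot l1 y \<noteq> 0"
  proof
    assume "vdot l1 y = 0"
    then have "pt y \<in> L1" using J[OF y(1)] l1(2) by simp
    then show False using no3[OF inS(1) inS(2) inS(4) dd(1) dd(3) dd(5) _ y(2) y(3)] by blast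
  qed
  have n5: "vdot l2 z \<noteq> 0"
  proof
    assume "vdot l2 z = 0"
    then have "pt z \<in> L2" using J[OF z(1)] l2(2) by simp
    then show False using no3[OF inS(2) inS(3) inS(4) dd(4) dd(5) dd(6) _ z(2) z(3)] by blast
  qed
  have i1: "vdot l1 b = 0" "vdot l1 c = 0" "vdot l1 x = 0"
    using I[OF b(1)] I[OF c(1)] I[OF x(1)] b(2) c(2) x(2) l1(2) by auto
  have i2: "vdot l2 a = 0" "vdot l2 c = 0" "vdot l2 y = 0"
    using I[OF a(1)] I[OF c(1)] I[OF y(1)] a(2) c(3) y(2) l2(2) by auto
  have i3: "vdot l3 a = 0" "vdot l3 b = 0" "vdot l3 z = 0"
    using I[OF a(1)] I[OF b(1)] I[OF z(1)] a(3) b(3) z(2) l3(2) by auto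
  have i4: "vdot l4 x = 0" "vdot l4 y = 0" "vdot l4 z = 0"
    using I[OF x(1)] I[OF y(1)] I[OF z(1)] x(3) y(3) z(3) l4(2) by auto
  show False
    by (rule onan[OF l4(1) b(1) a(4) b(4) c(4) x(4) y(4) z(4) i1 i2 i3 i4 n1 n2 n3 n4 n5])
qed

end
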